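(* Let $(X,T)$ and $(Y,S)$ be minimal topological dynamical systems with $T$ a homeomorphism, and let $\pi: X\to Y$ be a factor map. If $\pi$ is proximal and not almost one-to-one, then $(X,T)$ is strongly $\mathcal{F}_{ip}$-sensitive.
   Context: A topological dynamical system: compact metric space $(X,d)$ with continuous surjection $T$; minimal means every orbit is dense. A factor map $\pi$ is a continuous surjection with $\pi\circ T=S\circ\pi$. A pair $(x,y)$ is proximal if $\inf_n d(T^nx,T^ny)=0$; $\pi$ is proximal if all pairs in the same fiber are proximal; $\pi$ is almost one-to-one if $\{x:\pi^{-1}(\pi(x))=\{x\}\}$ is dense. $\mathcal{F}_{ip}$ is the family of subsets of $\mathbb{Z}_+$ containing some $FS((p_i)_{i=1}^\infty)=\{\sum_{i\in\alpha}p_i:\alpha\subset\mathbb{N}$ finite nonempty$\}$, $p_i\in\mathbb{N}$. $(X,T)$ is strongly $\mathcal{F}_{ip}$-sensitive if there is $\delta>0$ such that for each nonempty open $U$ there are $x,y\in U$ with $\{n\in\mathbb{Z}_+:d(T^nx,T^ny)>\delta\}\in\mathcal{F}_{ip}$. *)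

theory Defs
  imports "HOL-Analysis.Analysis"
begin

definition tds :: "'a::metric_space set \<Rightarrow> ('a \<Rightarrow> 'a) \<Rightarrow> bool" where
  "tds X T \<longleftrightarrow> compact X \<and> X \<noteq> {} \<and> continuous_on X T \<and> T ` X = X"

definition minimal_tds :: "'a::metric_space set \<Rightarrow> ('a \<Rightarrow> 'a) \<Rightarrow> bool" where
  "minimal_tds X T \<longleftrightarrow> tds X T \<and>
     (\<forall>x\<in>X. closure {(T ^^ n) x | n. True} = X)"

definition factor_map ::
  "'a::metric_space set \<Rightarrow> ('a \<Rightarrow> 'a) \<Rightarrow> 'b::metric_space set \<Rightarrow> ('b \<Rightarrow> 'b) \<Rightarrow> ('a \<Rightarrow> 'b) \<Rightarrow> bool" where
  "factor_map X T Y S \<pi> \<longleftrightarrow> continuous_on X \<pi> \<and> \<pi> ` X = Y \<and> (\<forall>x\<in>X. \<pi> (T x) = S (\<pi> x))"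

definition proximal_pair :: "('a::metric_space \<Rightarrow> 'a) \<Rightarrow> 'a \<Rightarrow> 'a \<Rightarrow> bool" where
  "proximal_pair T x y \<longleftrightarrow> (INF n. dist ((T ^^ n) x) ((T ^^ n) y)) = 0"

definition proximal_factor ::
  "'a::metric_space set \<Rightarrow> ('a \<Rightarrow> 'a) \<Rightarrow> ('a \<Rightarrow> 'b) \<Rightarrow> bool" where
  "proximal_factor X T \<pi> \<longleftrightarrow> (\<forall>x\<in>X. \<forall>y\<in>X. \<pi> x = \<pi> y \<longrightarrow> proximal_pair T x y)"

definition almost_one_to_one :: "'a::metric_space set \<Rightarrow> ('a \<Rightarrow> 'b) \<Rightarrow> bool" where
  "almost_one_to_one X \<pi> \<longleftrightarrow> X \<subseteq> closure {x\<in>X. {x'\<in>X. \<pi> x' = \<pi> x} = {x}}"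

definition FS :: "(nat \<Rightarrow> nat) \<Rightarrow> nat set" where
  "FS p = {(\<Sum>i\<in>\<alpha>. p i) | \<alpha>. finite \<alpha> \<and> \<alpha> \<noteq> {}}"

definition F_ip :: "nat set set" where
  "F_ip = {A. \<exists>p. (\<forall>i. p i \<ge> 1) \<and> FS p \<subseteq> A}"

definition strongly_Fip_sensitive :: "'a::metric_space set \<Rightarrow> ('a \<Rightarrow> 'a) \<Rightarrow> bool" where
  "strongly_Fip_sensitive X T \<longleftrightarrow> (\<exists>\<delta>>0. \<forall>U. openin (top_of_set X) U \<and> U \<noteq> {} \<longrightarrow>
     (\<exists>x\<in>U. \<exists>y\<in>U. {n. dist ((T ^^ n) x) ((T ^^ n) y) > \<delta>} \<in> F_ip))"

end

theory Submission
  imports Defs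
begin

lemma compact_imp_closed_fun:
  fixes S :: "('a \<Rightarrow> 'b::metric_space) set"
  assumes "compact S" shows "closed S"
proof -
  have H: "Hausdorff_space (product_topology (\<lambda>i. euclidean::'b topology) (UNIV::'a set))"
    by (simp add: Hausdorff_space_product_topology)
  have "compactin (product_topology (\<lambda>i. euclidean::'b topology) (UNIV::'a set)) S"
    using assms by (simp add: euclidean_product_topology)
  then have "closedin (product_topology (\<lambda>i. euclidean::'b topology) (UNIV::'a set)) S"
    using compactin_imp_closedin[OF H] by blast
  then show ?thesis by (simp add: euclidean_product_topology)
qed

lemma finite_chain_min:
  assumes "finite F" "F \<noteq> {}" "\<And>B B'. B \<in> F \<Longrightarrow> B' \<in> F \<Longrightarrow> B \<subseteq> B' \<or> B' \<subseteq> B"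
  shows "\<exists>m\<in>F. \<forall>B\<in>F. m \<subseteq> B"
  using assms
proof (induction F rule: finite_ne_induct)
  case (singleton x) then show ?case by auto
next
  case (insert x F)
  then obtain m where m: "m \<in> F" "\<forall>B\<in>F. m \<subseteq> B" by (metis insertCI)
  have "x \<subseteq> m \<or> m \<subseteq> x" using insert.prems m(1) by blast
  then show ?case
  proof
    assume "x \<subseteq> m" then show ?thesis using m by (metis insert_iff order_refl order_trans)
  next
    assume "m \<subseteq> x" then show ?thesis using m by auto
  qed
qed

definition csg :: "('a \<Rightarrow> 'a::topological_space) set \<Rightarrow> ('a \<Rightarrow> 'a) set \<Rightarrow> bool" where
  "csg A B \<longleftrightarrow> B \<subseteq> A \<and> closed B \<and> B \<noteq> {} \<and> (\<forall>p\<in>B. \<forall>q\<in>B. p \<circ> q \<in> B)"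

lemma minimal_csg:
  fixes A :: "('a \<Rightarrow> 'a::metric_space) set"
  assumes cA: "compact A" and ne: "A \<noteq> {}" and sg: "\<And>p q. p\<in>A \<Longrightarrow> q\<in>A \<Longrightarrow> p \<circ> q \<in> A"
  shows "\<exists>B. csg A B \<and> (\<forall>B'. csg A B' \<longrightarrow> B' \<subseteq> B \<longrightarrow> B' = B)"
proof -
  define \<A> where "\<A> = uminus ` {B. csg A B}"
  have AA: "csg A A" unfolding csg_def using compact_imp_closed_fun[OF cA] ne sg by blast
  have "\<exists>M\<in>\<A>. \<forall>Y\<in>\<A>. M \<subseteq> Y \<longrightarrow> Y = M"
  proof (rule subset_Zorn_nonempty)
    show "\<A> \<noteq> {}" using AA unfolding \<A>_def by blast
    fix \<C> assume C: "\<C> \<noteq> {}" "subset.chain \<A> \<C>"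
    define \<B> where "\<B> = uminus ` \<C>"
    have CA: "\<C> \<subseteq> \<A>" using C(2) by (simp add: subset.chain_def)
    have Bin: "csg A B" if Bb: "B \<in> \<B>" for B
    proof -
      obtain Cc where Cc: "Cc \<in> \<C>" "B = - Cc" using Bb \<B>_def by blast
      then obtain B0 where "csg A B0" "Cc = - B0" using CA \<A>_def by blast
      then show ?thesis using Cc by simp
    qed
    have chB: "B \<subseteq> B' \<or> B' \<subseteq> B" if Bb: "B \<in> \<B>" "B' \<in> \<B>" for B B'
    proof -
      obtain Cc Cc' where "Cc \<in> \<C>" "B = - Cc" "Cc' \<in> \<C>" "B' = - Cc'" using Bb \<B>_def by blast
      moreover have "Cc \<subseteq> Cc' \<or> Cc' \<subseteq> Cc" using C(2) calculation(1,3) unfolding subset.chain_def by blast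
      ultimately show ?thesis by blast
    qed
    have neB: "\<B> \<noteq> {}" using C(1) \<B>_def by blast
    have "A \<inter> \<Inter>\<B> \<noteq> {}"
    proof (rule compact_imp_fip[OF cA])
      show "\<And>B. B \<in> \<B> \<Longrightarrow> closed B" using Bin csg_def by blast
      fix F' assume F': "finite F'" "F' \<subseteq> \<B>"
      show "A \<inter> \<Inter>F' \<noteq> {}"
      proof (cases "F' = {}")
        case True then show ?thesis using ne by simp
      next
        case False
        obtain m where m: "m \<in> F'" "\<forall>B\<in>F'. m \<subseteq> B"
          using finite_chain_min[OF F'(1) False] F'(2) chB by (meson subsetD)
        then have "m \<subseteq> \<Inter>F'" by blast
        moreover have "csg A m" using Bin F'(2) m(1) by blast
        ultimately show ?thesis unfolding csg_def by blast
      qed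
    qed
    then have i1: "\<Inter>\<B> \<noteq> {}" by blast
    have i2: "\<Inter>\<B> \<subseteq> A" using Bin neB unfolding csg_def by blast
    have i3: "closed (\<Inter>\<B>)" using Bin unfolding csg_def by (intro closed_Inter) blast
    have i4: "\<forall>p\<in>\<Inter>\<B>. \<forall>q\<in>\<Inter>\<B>. p \<circ> q \<in> \<Inter>\<B>" using Bin unfolding csg_def by blast
    have "csg A (\<Inter>\<B>)" unfolding csg_def using i1 i2 i3 i4 by blast
    then have "- \<Inter>\<B> \<in> \<A>" unfolding \<A>_def by blast
    moreover have "\<Union>\<C> = - \<Inter>\<B>" unfolding \<B>_def by auto
    ultimately show "\<Union>\<C> \<in> \<A>" by simp
  qed
  then obtain M where M: "M \<in> \<A>" "\<And>Y. Y \<in> \<A> \<Longrightarrow> M \<subseteq> Y \<Longrightarrow> Y = M" by blast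
  then obtain B where B: "csg A B" "M = - B" unfolding \<A>_def by blast
  have "B' = B" if "csg A B'" "B' \<subseteq> B" for B'
  proof -
    have "- B' \<in> \<A>" using that(1) unfolding \<A>_def by blast
    moreover have "M \<subseteq> - B'" using B(2) that(2) by blast
    ultimately have "- B' = - B" using M(2) B(2) by blast
    then show ?thesis by simp
  qed
  then show ?thesis using B(1) by blast
qed

lemma idempotent_gen:
  fixes A :: "('a \<Rightarrow> 'a::metric_space) set"
  assumes cA: "compact A" and ne: "A \<noteq> {}" and sg: "\<And>p q. p\<in>A \<Longrightarrow> q\<in>A \<Longrightarrow> p \<circ> q \<in> A"
  shows "\<exists>u\<in>A. u \<circ> u = u"
proof -
  obtain B where B: "csg A B" and minB: "\<And>B'. csg A B' \<Longrightarrow> B' \<subseteq> B \<Longrightarrow> B' = B"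
    using minimal_csg[OF assms] by blast
  have B1: "B \<subseteq> A" "closed B" "B \<noteq> {}" "\<forall>p\<in>B. \<forall>q\<in>B. p \<circ> q \<in> B" using B unfolding csg_def by auto
  obtain b where b: "b \<in> B" using B1 by blast
  have cpB: "compact B"
  proof -
    have "compact (A \<inter> B)" using compact_Int_closed[OF cA B1(2)] .
    then show ?thesis using B1(1) by (simp add: Int_absorb1)
  qed
  define B1' where "B1' = (\<lambda>p. p \<circ> b) ` B"
  have contR: "continuous_on UNIV (\<lambda>p::'a\<Rightarrow>'a. p \<circ> b)"
    by (rule continuous_on_coordinatewise_then_product) (simp add: comp_def continuous_on_product_coordinates)
  have "compact B1'" unfolding B1'_def
    by (rule compact_continuous_image[OF continuous_on_subset[OF contR] cpB]) simp
  then have c1: "closed B1'" by (rule compact_imp_closed_fun)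
  have c2: "B1' \<subseteq> B" using B1(4) b unfolding B1'_def by blast
  have c3: "B1' \<noteq> {}" using b B1'_def by blast
  have c4: "\<forall>p\<in>B1'. \<forall>q\<in>B1'. p \<circ> q \<in> B1'"
  proof (intro ballI)
    fix p q assume "p \<in> B1'" "q \<in> B1'"
    then obtain p0 q0 where pq: "p0 \<in> B" "q0 \<in> B" "p = p0 \<circ> b" "q = q0 \<circ> b" unfolding B1'_def by blast
    have "p \<circ> q = (p0 \<circ> (b \<circ> q0)) \<circ> b" using pq by (simp add: comp_assoc)
    moreover have "p0 \<circ> (b \<circ> q0) \<in> B" using B1(4) pq b by blast
    ultimately show "p \<circ> q \<in> B1'" unfolding B1'_def by blast
  qed
  have "csg A B1'" unfolding csg_def using c1 c2 c3 c4 B1(1) by blast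
  then have "B1' = B" using minB c2 by blast
  then obtain c where c: "c \<in> B" "c \<circ> b = b" using b unfolding B1'_def by (metis imageE)
  define B2 where "B2 = {p\<in>B. p \<circ> b = b}"
  have B2eq: "B2 = B \<inter> (\<Inter>z. {p. p (b z) = b z})" unfolding B2_def by (auto simp: fun_eq_iff)
  have d1: "closed B2" unfolding B2eq
    by (intro closed_Int B1(2) closed_INT ballI closed_Collect_eq continuous_on_product_coordinates continuous_on_const)
  have d2: "B2 \<subseteq> B" "B2 \<noteq> {}" using c unfolding B2_def by auto
  have d3: "\<forall>p\<in>B2. \<forall>q\<in>B2. p \<circ> q \<in> B2" using B1(4) unfolding B2_def by (auto simp: comp_assoc)
  have "csg A B2" unfolding csg_def using d1 d2 d3 B1(1) by blast
  then have "B2 = B" using minB d2 by blast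
  then have "b \<circ> b = b" using b unfolding B2_def by blast
  then show ?thesis using b B1(1) by blast
qed


lemma closure_fun_intro:
  fixes S :: "('a \<Rightarrow> 'b::topological_space) set"
  assumes "\<And>I G. finite I \<Longrightarrow> (\<And>i. i \<in> I \<Longrightarrow> open (G i) \<and> p i \<in> G i) \<Longrightarrow> \<exists>s\<in>S. \<forall>i\<in>I. s i \<in> G i"
  shows "p \<in> closure S"
proof (rule ccontr)
  assume np: "p \<notin> closure S"
  define W where "W = - closure S"
  have "open W" unfolding W_def by auto
  then have "openin (product_topology (\<lambda>i. euclidean) UNIV) W" by (simp add: open_fun_def)
  from product_topology_open_contains_basis[OF this, of p] np
  obtain Xb where Xb: "p \<in> (\<Pi>\<^sub>E i\<in>UNIV. Xb i)" "\<And>i. open (Xb i)"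
    "finite {i. Xb i \<noteq> UNIV}" "(\<Pi>\<^sub>E i\<in>UNIV. Xb i) \<subseteq> W"
    unfolding W_def by auto
  obtain s where s: "s \<in> S" "\<forall>i\<in>{i. Xb i \<noteq> UNIV}. s i \<in> Xb i"
    using assms[of "{i. Xb i \<noteq> UNIV}" Xb] Xb by (auto simp: PiE_UNIV_domain)
  have "s \<in> (\<Pi>\<^sub>E i\<in>UNIV. Xb i)" using s by (auto simp: PiE_UNIV_domain)
  with Xb(4) s(1) show False unfolding W_def using closure_subset by blast
qed

lemma cont_open_ball:
  fixes f :: "'a::metric_space \<Rightarrow> 'b::metric_space"
  assumes "continuous_on X f" "y \<in> X" "open G" "f y \<in> G"
  shows "\<exists>d>0. \<forall>w\<in>X. dist w y < d \<longrightarrow> f w \<in> G"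
proof -
  obtain e where e: "e > 0" "ball (f y) e \<subseteq> G" using assms openE by blast
  obtain d where "d > 0" "\<forall>w\<in>X. dist w y < d \<longrightarrow> dist (f w) (f y) < e"
    using assms(1,2) e(1) unfolding continuous_on_iff by blast
  then show ?thesis apply (intro exI[of _ d]) using e(2) by (auto simp: dist_commute subset_iff)
qed

locale tdsh =
  fixes X :: "'a::metric_space set" and T :: "'a \<Rightarrow> 'a"
  assumes cpt: "compact X" and Xne: "X \<noteq> {}" and cont: "continuous_on X T"
    and TX: "T ` X = X"
    and mini: "\<forall>x\<in>X. closure {(T ^^ n) x | n. True} = X"
begin

definition "T' = (\<lambda>z. if z \<in> X then T z else z)"
definition "KK = {f::'a\<Rightarrow>'a. \<forall>z. f z \<in> (if z \<in> X then X else {z})}"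
definition "E = closure {T' ^^ n | n. n \<ge> 1}"

lemma Tin: "z \<in> X \<Longrightarrow> T z \<in> X" using TX by auto
lemma Tn_in: "z \<in> X \<Longrightarrow> (T^^n) z \<in> X" by (induction n) (auto simp: Tin)
lemma T'n: "z \<in> X \<Longrightarrow> (T'^^n) z = (T^^n) z"
  by (induction n) (auto simp: T'_def Tn_in)
lemma T'n_out: "z \<notin> X \<Longrightarrow> (T'^^n) z = z"
  by (induction n) (auto simp: T'_def)
lemma cont_Tn: "continuous_on X (T^^n)"
proof (induction n)
  case 0 then show ?case by (simp add: continuous_on_id)
next
  case (Suc n)
  have "continuous_on X (T \<circ> (T^^n))"
    by (rule continuous_on_compose[OF Suc]) (rule continuous_on_subset[OF cont], auto simp: Tn_in)
  then show ?case by simp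
qed

lemma KK_eq: "KK = PiE UNIV (\<lambda>z. if z \<in> X then X else {z})"
  unfolding KK_def PiE_UNIV_domain Pi_def by auto
lemma compact_KK: "compact KK"
proof -
  have "compactin (product_topology (\<lambda>i. euclidean) UNIV) (PiE UNIV (\<lambda>z. if z \<in> X then X else {z}))"
    by (subst compactin_PiE) (auto simp: cpt)
  then show ?thesis by (simp add: KK_eq euclidean_product_topology)
qed
lemma closed_KK: "closed KK" using compact_KK compact_imp_closed_fun by blast
lemma gen_KK: "T'^^n \<in> KK" by (auto simp: KK_def T'n T'n_out Tn_in)
lemma E_KK: "E \<subseteq> KK" unfolding E_def by (rule closure_minimal) (auto simp: gen_KK closed_KK)
lemma compact_E: "compact E"
proof -
  have "compact (KK \<inter> E)" using compact_Int_closed[OF compact_KK] unfolding E_def by auto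
  then show ?thesis using E_KK by (simp add: Int_absorb1)
qed
lemma closed_E: "closed E" unfolding E_def by simp
lemma E_KK': "p \<in> E \<Longrightarrow> p z \<in> (if z \<in> X then X else {z})" using E_KK unfolding KK_def by blast
lemma E_in: "p \<in> E \<Longrightarrow> z \<in> X \<Longrightarrow> p z \<in> X" using E_KK'[of p z] by simp
lemma E_out: "p \<in> E \<Longrightarrow> z \<notin> X \<Longrightarrow> p z = z" using E_KK'[of p z] by simp
lemma gen_E: "n \<ge> 1 \<Longrightarrow> T'^^n \<in> E" unfolding E_def by (rule closure_subset[THEN subsetD]) auto

lemma approx:
  assumes "p \<in> E" "finite I" "\<And>i. i \<in> I \<Longrightarrow> x i \<in> X \<and> open (G i) \<and> p (x i) \<in> G i"
  shows "\<exists>n\<ge>1. \<forall>i\<in>I. (T^^n) (x i) \<in> G i"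
proof -
  define W where "W = {f. \<forall>i\<in>I. f (x i) \<in> G i}"
  have oG: "\<And>i. i \<in> I \<Longrightarrow> open (G i)" using assms(3) by blast
  have oW: "open W" unfolding W_def
    by (rule product_topology_basis'[where I=I and x=x and U=G, OF assms(2) oG])
  have "p \<in> W" using assms(3) unfolding W_def by blast
  then have "W \<inter> closure {T' ^^ n | n. n \<ge> 1} \<noteq> {}" using assms(1) unfolding E_def by blast
  then have "W \<inter> {T' ^^ n | n. n \<ge> 1} \<noteq> {}" using open_Int_closure_eq_empty[OF oW] by blast
  then obtain n where "n \<ge> 1" "\<forall>i\<in>I. (T'^^n) (x i) \<in> G i" unfolding W_def by auto
  then show ?thesis using assms(3) by (auto simp: T'n)
qed

lemma commute: assumes "p \<in> E" "z \<in> X" shows "T (p z) = p (T z)"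
proof (rule ccontr)
  assume ne: "T (p z) \<noteq> p (T z)"
  define e where "e = dist (T (p z)) (p (T z)) / 2"
  have e: "e > 0" using ne by (simp add: e_def)
  have pz: "p z \<in> X" "T z \<in> X" using E_in assms Tin by auto
  obtain d where d: "d > 0" "\<forall>w\<in>X. dist w (p z) < d \<longrightarrow> T w \<in> ball (T (p z)) e"
    using cont_open_ball[OF cont pz(1), of "ball (T (p z)) e"] e by auto
  define x where "x = (\<lambda>i::nat. if i = 0 then z else T z)"
  define G where "G = (\<lambda>i::nat. if i = 0 then ball (p z) d else ball (p (T z)) e)"
  have hyp: "\<And>i. i \<in> {0,1} \<Longrightarrow> x i \<in> X \<and> open (G i) \<and> p (x i) \<in> G i"
    using pz d e assms(2) by (auto simp: x_def G_def)
  have "\<exists>n\<ge>1. \<forall>i\<in>{0,1::nat}. (T^^n) (x i) \<in> G i"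
    by (rule approx[OF assms(1)]) (use hyp in auto)
  then obtain n where n: "n \<ge> 1" "\<forall>i\<in>{0,1}. (T^^n) (x i) \<in> G i" by blast
  then have h1: "(T^^n) z \<in> ball (p z) d" and h2: "(T^^n) (T z) \<in> ball (p (T z)) e"
    by (auto simp: x_def G_def)
  have "dist ((T^^n) z) (p z) < d" using h1 by (simp add: dist_commute)
  then have h3: "T ((T^^n) z) \<in> ball (T (p z)) e" using d(2) Tn_in[OF assms(2)] by blast
  have h4: "T ((T^^n) z) = (T^^n) (T z)" by (simp add: funpow_swap1)
  have "dist (T (p z)) (p (T z)) \<le> dist (T (p z)) (T ((T^^n) z)) + dist (T ((T^^n) z)) (p (T z))"
    by (rule dist_triangle)
  then show False using h2 h3 h4 e_def by (simp add: dist_commute)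
qed

lemma commute_n: assumes "p \<in> E" "z \<in> X" shows "(T^^n) (p z) = p ((T^^n) z)"
proof (induction n)
  case 0 then show ?case by simp
next
  case (Suc n)
  have "(T^^Suc n) (p z) = T (p ((T^^n) z))" using Suc by simp
  also have "\<dots> = p (T ((T^^n) z))" using commute[OF assms(1) Tn_in[OF assms(2)]] .
  finally show ?case by simp
qed

lemma comp_E: assumes "p \<in> E" "q \<in> E" shows "p \<circ> q \<in> E"
proof -
  have "p \<circ> q \<in> closure {T' ^^ n | n. n \<ge> 1}"
  proof (rule closure_fun_intro)
    fix I G assume I: "finite I" and G: "\<And>i. i \<in> I \<Longrightarrow> open (G i) \<and> (p \<circ> q) i \<in> G i"
    define I1 where "I1 = I \<inter> X"
    have fin1: "finite I1" using I by (simp add: I1_def)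
    obtain n where n: "n \<ge> 1" "\<forall>i\<in>I1. (T^^n) (q i) \<in> G i"
      using approx[OF assms(1) fin1, of q G] G E_in[OF assms(2)] by (auto simp: I1_def)
    have "\<forall>i\<in>I1. \<exists>d>0. \<forall>w\<in>X. dist w (q i) < d \<longrightarrow> (T^^n) w \<in> G i"
      using cont_open_ball[OF cont_Tn] n G E_in[OF assms(2)] by (auto simp: I1_def)
    then obtain d where d: "\<forall>i\<in>I1. d i > 0 \<and> (\<forall>w\<in>X. dist w (q i) < d i \<longrightarrow> (T^^n) w \<in> G i)"
      by metis
    obtain m where m: "m \<ge> 1" "\<forall>i\<in>I1. (T^^m) (id i) \<in> ball (q i) (d i)"
      using approx[OF assms(2) fin1, of id "\<lambda>i. ball (q i) (d i)"] d by (auto simp: I1_def)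
    show "\<exists>s\<in>{T' ^^ n | n. n \<ge> 1}. \<forall>i\<in>I. s i \<in> G i"
    proof (intro bexI ballI)
      show "T'^^(n+m) \<in> {T' ^^ n | n. n \<ge> 1}" using n by auto
      fix i assume i: "i \<in> I"
      show "(T'^^(n+m)) i \<in> G i"
      proof (cases "i \<in> X")
        case True
        then have "i \<in> I1" using i I1_def by auto
        then have "(T^^n) ((T^^m) i) \<in> G i" using d m Tn_in True by (auto simp: dist_commute)
        then show ?thesis using True by (simp add: T'n funpow_add Tn_in[OF True])
      next
        case False
        have "q i = i" "p i = i" using E_out assms False by auto
        then show ?thesis using G[OF i] False by (simp add: T'n_out)
      qed
    qed
  qed
  then show ?thesis by (simp add: E_def)
qed

lemma reach: assumes "e \<in> X" "x' \<in> X" shows "\<exists>r\<in>E. r e = x'"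
proof -
  have "continuous_on E (\<lambda>r::'a\<Rightarrow>'a. r e)"
    by (rule continuous_on_subset[OF continuous_on_product_coordinates]) auto
  then have "compact ((\<lambda>r. r e) ` E)" by (rule compact_continuous_image[OF _ compact_E])
  then have cl: "closed ((\<lambda>r. r e) ` E)" by (rule compact_imp_closed)
  have "{(T ^^ n) (T e) | n. True} \<subseteq> (\<lambda>r. r e) ` E"
  proof
    fix y assume "y \<in> {(T ^^ n) (T e) | n. True}"
    then obtain n where y: "y = (T^^n) (T e)" by auto
    have "(T'^^(Suc n)) e = (T^^(Suc n)) e" by (rule T'n[OF assms(1)])
    also have "\<dots> = (T^^n) (T e)" by (simp only: funpow_Suc_right comp_apply)
    finally have yeq: "y = (T'^^(Suc n)) e" using y by simp
    show "y \<in> (\<lambda>r. r e) ` E"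
      by (rule image_eqI[OF _ gen_E[of "Suc n"]]) (simp_all add: yeq del: funpow.simps)
  qed
  then have "closure {(T ^^ n) (T e) | n. True} \<subseteq> (\<lambda>r. r e) ` E" using cl closure_minimal by blast
  moreover have "closure {(T ^^ n) (T e) | n. True} = X" using mini Tin assms(1) by blast
  ultimately show ?thesis using assms(2) by auto
qed

lemma collapse:
  assumes "a \<in> X" "b \<in> X" "\<forall>\<epsilon>>0. \<exists>n\<ge>1. dist ((T^^n) a) ((T^^n) b) < \<epsilon>"
  shows "\<exists>p\<in>E. p a = p b"
proof -
  define C where "C = (\<lambda>k::nat. {f::'a\<Rightarrow>'a. dist (f a) (f b) \<le> inverse (real (Suc k))})"
  have cd: "continuous_on UNIV (\<lambda>f::'a\<Rightarrow>'a. dist (f a) (f b))"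
    by (intro continuous_on_dist continuous_on_product_coordinates)
  have clC: "closed (C k)" for k unfolding C_def
    by (rule closed_Collect_le[OF cd continuous_on_const])
  have "E \<inter> \<Inter> (range C) \<noteq> {}"
  proof (rule compact_imp_fip[OF compact_E])
    show "\<And>T. T \<in> range C \<Longrightarrow> closed T" using clC by auto
    fix F' assume F': "finite F'" "F' \<subseteq> range C"
    then obtain K where K: "finite K" "F' = C ` K" by (meson finite_subset_image)
    define N where "N = Max (insert 0 K)"
    obtain n where n: "n \<ge> 1" "dist ((T^^n) a) ((T^^n) b) < inverse (real (Suc N))"
      using assms(3) by (meson inverse_positive_iff_positive of_nat_0_less_iff zero_less_Suc)
    have "T'^^n \<in> C k" if "k \<in> K" for k
    proof -
      have "k \<le> N" using K that by (simp add: N_def)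
      then have "inverse (real (Suc N)) \<le> inverse (real (Suc k))" by (intro le_imp_inverse_le) auto
      then have "dist ((T^^n) a) ((T^^n) b) \<le> inverse (real (Suc k))" using n(2) by linarith
      then show ?thesis using assms(1,2) by (simp add: C_def T'n)
    qed
    then have "T'^^n \<in> E \<inter> \<Inter>F'" using K gen_E n by auto
    then show "E \<inter> \<Inter>F' \<noteq> {}" by blast
  qed
  then obtain p where p: "p \<in> E" "\<And>k. dist (p a) (p b) \<le> inverse (real (Suc k))" by (auto simp: C_def)
  have "dist (p a) (p b) = 0"
  proof (rule ccontr)
    assume "dist (p a) (p b) \<noteq> 0"
    then have "dist (p a) (p b) > 0" by simp
    then obtain n where n: "n > 0" "inverse (real n) < dist (p a) (p b)" using ex_inverse_of_nat_less by blast
    have "inverse (real (Suc (n - 1))) = inverse (real n)" using n(1) by simp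
    then show False using p(2)[of "n - 1"] n(2) by linarith
  qed
  then show ?thesis using p by auto
qed

lemma fix_idem:
  assumes "x \<in> X" "x' \<in> X" "\<exists>p\<in>E. p x = p x'"
  shows "\<exists>u\<in>E. u \<circ> u = u \<and> u x = x' \<and> u x' = x'"
proof -
  obtain p where p: "p \<in> E" "p x = p x'" using assms by auto
  obtain r where r: "r \<in> E" "r (p x) = x'" using reach[OF E_in[OF p(1) assms(1)] assms(2)] by auto
  define A where "A = E \<inter> ({f. f x = x'} \<inter> {f. f x' = x'})"
  have "closed ({f::'a\<Rightarrow>'a. f x = x'} \<inter> {f. f x' = x'})"
    by (intro closed_Int closed_Collect_eq continuous_on_product_coordinates continuous_on_const)
  then have "compact A" unfolding A_def by (rule compact_Int_closed[OF compact_E])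
  moreover have "r \<circ> p \<in> A" using comp_E r p by (auto simp: A_def)
  moreover have "\<And>f g. f\<in>A \<Longrightarrow> g\<in>A \<Longrightarrow> f \<circ> g \<in> A" using comp_E by (auto simp: A_def)
  ultimately obtain u where "u \<in> A" "u \<circ> u = u" using idempotent_gen[of A] by blast
  then show ?thesis unfolding A_def by auto
qed

lemma dense_fix:
  assumes "u \<in> E" "u \<circ> u = u" "openin (top_of_set X) U" "U \<noteq> {}"
  shows "\<exists>y\<in>U. u y = y"
proof -
  obtain z0 where z0: "z0 \<in> X" using Xne by auto
  have w: "u z0 \<in> X" using E_in assms z0 by auto
  obtain G where G: "open G" "U = X \<inter> G" using assms(3) by (auto simp: openin_open)
  obtain y0 where y0: "y0 \<in> U" using assms(4) by auto
  have "y0 \<in> closure {(T ^^ n) (u z0) | n. True}" using mini w G y0 by auto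
  then have "G \<inter> {(T ^^ n) (u z0) | n. True} \<noteq> {}" using G y0 open_Int_closure_eq_empty by blast
  then obtain n where n: "(T^^n) (u z0) \<in> G" by auto
  define y where "y = u ((T^^n) z0)"
  have "y = (T^^n) (u z0)" using commute_n assms(1) z0 y_def by simp
  then have "y \<in> U" using n G Tn_in w by auto
  moreover have "u y = y" unfolding y_def using assms(2) by (metis comp_apply)
  ultimately show ?thesis by blast
qed

end


context tdsh
begin

lemma IP_lemma:
  assumes ab: "a \<in> X" "b \<in> X" "a' \<in> X" "b' \<in> X" and far: "dist a' b' > \<delta>"
  and Q: "\<And>\<epsilon>. \<epsilon> > 0 \<Longrightarrow> \<exists>n\<ge>1. dist ((T^^n) a) a' < \<epsilon> \<and> dist ((T^^n) b) b' < \<epsilon>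
            \<and> dist ((T^^n) a') a' < \<epsilon> \<and> dist ((T^^n) b') b' < \<epsilon>"
  shows "{n. dist ((T^^n) a) ((T^^n) b) > \<delta>} \<in> F_ip"
proof -
  define P where "P = (\<lambda>s. dist ((T^^s) a) ((T^^s) b) > \<delta> \<and> dist ((T^^s) a') ((T^^s) b') > \<delta>)"
  have step: "\<exists>n\<ge>1. \<forall>s\<in>insert 0 F. P (s + n)" if F: "finite F" "\<forall>s\<in>F. P s" for F
  proof -
    define F0 where "F0 = insert 0 F"
    have fin: "finite F0" using F by (simp add: F0_def)
    have far0: "\<forall>s\<in>F0. dist ((T^^s) a') ((T^^s) b') > \<delta>" using F far by (auto simp: F0_def P_def)
    have "\<forall>s\<in>F0. \<exists>\<epsilon>>0. \<forall>w\<in>X. \<forall>v\<in>X. dist w a' < \<epsilon> \<longrightarrow> dist v b' < \<epsilon> \<longrightarrow> dist ((T^^s) w) ((T^^s) v) > \<delta>"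
    proof
      fix s assume s: "s \<in> F0"
      define g where "g = dist ((T^^s) a') ((T^^s) b') - \<delta>"
      have g: "g/2 > 0" using far0 s by (simp add: g_def)
      obtain e1 where e1: "e1 > 0" "\<forall>w\<in>X. dist w a' < e1 \<longrightarrow> dist ((T^^s) w) ((T^^s) a') < g/2"
        using cont_Tn[of s] ab(3) g unfolding continuous_on_iff by blast
      obtain e2 where e2: "e2 > 0" "\<forall>w\<in>X. dist w b' < e2 \<longrightarrow> dist ((T^^s) w) ((T^^s) b') < g/2"
        using cont_Tn[of s] ab(4) g unfolding continuous_on_iff by blast
      show "\<exists>\<epsilon>>0. \<forall>w\<in>X. \<forall>v\<in>X. dist w a' < \<epsilon> \<longrightarrow> dist v b' < \<epsilon> \<longrightarrow> dist ((T^^s) w) ((T^^s) v) > \<delta>"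
      proof (intro exI[of _ "min e1 e2"] conjI ballI impI)
        show "min e1 e2 > 0" using e1 e2 by simp
        fix w v assume wv: "w \<in> X" "v \<in> X" "dist w a' < min e1 e2" "dist v b' < min e1 e2"
        have h1: "dist ((T^^s) w) ((T^^s) a') < g/2" using e1 wv by auto
        have h2: "dist ((T^^s) v) ((T^^s) b') < g/2" using e2 wv by auto
        have t1: "dist ((T^^s) a') ((T^^s) b') \<le> dist ((T^^s) a') ((T^^s) w) + dist ((T^^s) w) ((T^^s) b')"
          by (rule dist_triangle)
        have t2: "dist ((T^^s) w) ((T^^s) b') \<le> dist ((T^^s) w) ((T^^s) v) + dist ((T^^s) v) ((T^^s) b')"
          by (rule dist_triangle)
        show "dist ((T^^s) w) ((T^^s) v) > \<delta>" using h1 h2 t1 t2 g_def by (simp add: dist_commute)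
      qed
    qed
    then obtain \<epsilon> where \<epsilon>: "\<forall>s\<in>F0. \<epsilon> s > 0 \<and> (\<forall>w\<in>X. \<forall>v\<in>X. dist w a' < \<epsilon> s \<longrightarrow> dist v b' < \<epsilon> s \<longrightarrow> dist ((T^^s) w) ((T^^s) v) > \<delta>)"
      by metis
    define e where "e = Min (\<epsilon> ` F0)"
    have e: "e > 0" using fin \<epsilon> by (simp add: e_def F0_def)
    have eles: "\<forall>s\<in>F0. e \<le> \<epsilon> s" using fin by (simp add: e_def)
    obtain n where n: "n \<ge> 1" "dist ((T^^n) a) a' < e" "dist ((T^^n) b) b' < e"
            "dist ((T^^n) a') a' < e" "dist ((T^^n) b') b' < e" using Q[OF e] by blast
    show ?thesis
    proof (intro exI[of _ n] conjI ballI n(1))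
      fix s assume s: "s \<in> insert 0 F"
      then have s0: "s \<in> F0" by (simp add: F0_def)
      have X4: "(T^^n) a \<in> X" "(T^^n) b \<in> X" "(T^^n) a' \<in> X" "(T^^n) b' \<in> X" using ab Tn_in by auto
      have "dist ((T^^s) ((T^^n) a)) ((T^^s) ((T^^n) b)) > \<delta>"
        using \<epsilon> s0 eles X4 n by (meson less_le_trans)
      moreover have "dist ((T^^s) ((T^^n) a')) ((T^^s) ((T^^n) b')) > \<delta>"
        using \<epsilon> s0 eles X4 n by (meson less_le_trans)
      ultimately show "P (s + n)" unfolding P_def by (simp add: funpow_add)
    qed
  qed
  have "\<forall>F. \<exists>n. finite F \<and> (\<forall>s\<in>F. P s) \<longrightarrow> n \<ge> 1 \<and> (\<forall>s\<in>insert 0 F. P (s + n))"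
    using step by blast
  then obtain stp where stp: "\<And>F. finite F \<Longrightarrow> \<forall>s\<in>F. P s \<Longrightarrow> stp F \<ge> 1 \<and> (\<forall>s\<in>insert 0 F. P (s + stp F))"
    by metis
  define St where "St = rec_nat {} (\<lambda>k F. F \<union> (\<lambda>s. s + stp F) ` insert 0 F)"
  define p where "p = (\<lambda>k. stp (St k))"
  have St0: "St 0 = {}" by (simp add: St_def)
  have StS: "St (Suc k) = St k \<union> (\<lambda>s. s + p k) ` insert 0 (St k)" for k by (simp add: St_def p_def)
  have inv: "finite (St k) \<and> (\<forall>s\<in>St k. P s)" for k
  proof (induction k)
    case 0 then show ?case by (simp add: St0)
  next
    case (Suc k)
    have "\<forall>s\<in>insert 0 (St k). P (s + p k)" using stp Suc by (simp add: p_def)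
    then show ?case using Suc by (auto simp: StS)
  qed
  have pge: "p k \<ge> 1" for k using stp inv by (simp add: p_def)
  have sums: "sum p \<alpha> \<in> St k" if "\<alpha> \<subseteq> {..<k}" "\<alpha> \<noteq> {}" for \<alpha> k
    using that
  proof (induction k arbitrary: \<alpha>)
    case 0 then show ?case by auto
  next
    case (Suc k)
    show ?case
    proof (cases "k \<in> \<alpha>")
      case False
      then have "\<alpha> \<subseteq> {..<k}" using Suc.prems by (auto simp: less_Suc_eq)
      then show ?thesis using Suc by (auto simp: StS)
    next
      case True
      define \<beta> where "\<beta> = \<alpha> - {k}"
      have fa: "finite \<alpha>" using Suc.prems(1) finite_subset by blast
      have sa: "sum p \<alpha> = sum p \<beta> + p k" unfolding \<beta>_def using sum.remove[OF fa True, of p] by (simp add: add.commute)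
      have bk: "\<beta> \<subseteq> {..<k}" using Suc.prems(1) by (auto simp: \<beta>_def less_Suc_eq)
      show ?thesis
      proof (cases "\<beta> = {}")
        case True
        then show ?thesis using sa by (auto simp: StS)
      next
        case False
        then have "sum p \<beta> \<in> St k" using Suc.IH bk by blast
        then show ?thesis using sa by (auto simp: StS)
      qed
    qed
  qed
  show ?thesis unfolding F_ip_def
  proof (intro CollectI exI[of _ p] conjI allI subsetI)
    show "1 \<le> p i" for i using pge .
    fix m assume "m \<in> FS p"
    then obtain \<alpha> where \<alpha>: "m = sum p \<alpha>" "finite \<alpha>" "\<alpha> \<noteq> {}" by (auto simp: FS_def)
    have "\<alpha> \<subseteq> {..<Suc (Max \<alpha>)}" using \<alpha> by (auto simp: less_Suc_eq_le)
    then have "m \<in> St (Suc (Max \<alpha>))" using sums \<alpha> by blast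
    then have "P m" using inv by blast
    then show "dist ((T^^m) a) ((T^^m) b) > \<delta>" by (simp add: P_def)
  qed
qed

end


lemma closed_far_fiber:
  fixes X :: "'a::metric_space set" and \<pi> :: "'a \<Rightarrow> 'b::metric_space"
  assumes cpt: "compact X" and cpi: "continuous_on X \<pi>"
  shows "closed {w\<in>X. \<exists>w'\<in>X. \<pi> w' = \<pi> w \<and> c \<le> dist w w'}"
  unfolding closed_sequential_limits
proof (intro allI impI, elim conjE)
  fix x l assume xin: "\<forall>n. x n \<in> {w\<in>X. \<exists>w'\<in>X. \<pi> w' = \<pi> w \<and> c \<le> dist w w'}" and xl: "x \<longlonglongrightarrow> l"
  have clX: "closed X" using cpt compact_imp_closed by blast
  have "\<forall>n. \<exists>w'. w' \<in> X \<and> \<pi> w' = \<pi> (x n) \<and> c \<le> dist (x n) w'" using xin by blast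
  then obtain y where y: "\<And>n. y n \<in> X" "\<And>n. \<pi> (y n) = \<pi> (x n)" "\<And>n. c \<le> dist (x n) (y n)" by metis
  have xX: "\<And>n. x n \<in> X" using xin by blast
  have lX: "l \<in> X" using clX xX xl closed_sequentially by blast
  obtain l' r where l': "l' \<in> X" "strict_mono r" "(y \<circ> r) \<longlonglongrightarrow> l'"
    using seq_compactE[OF compact_imp_seq_compact[OF cpt], of y] y(1) by blast
  have xr: "(x \<circ> r) \<longlonglongrightarrow> l" using LIMSEQ_subseq_LIMSEQ[OF xl l'(2)] .
  have t1: "(\<lambda>n. \<pi> ((x \<circ> r) n)) \<longlonglongrightarrow> \<pi> l"
    by (rule continuous_on_tendsto_compose[OF cpi xr lX]) (simp add: xX)
  have t2: "(\<lambda>n. \<pi> ((y \<circ> r) n)) \<longlonglongrightarrow> \<pi> l'"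
    by (rule continuous_on_tendsto_compose[OF cpi l'(3) l'(1)]) (simp add: y(1))
  have "(\<lambda>n. \<pi> ((y \<circ> r) n)) = (\<lambda>n. \<pi> ((x \<circ> r) n))" using y(2) by auto
  then have "\<pi> l' = \<pi> l" using t1 t2 LIMSEQ_unique by metis
  moreover have "c \<le> dist l l'"
  proof (rule LIMSEQ_le_const)
    show "(\<lambda>n. dist ((x \<circ> r) n) ((y \<circ> r) n)) \<longlonglongrightarrow> dist l l'" by (intro tendsto_dist xr l'(3))
    show "\<exists>N. \<forall>n\<ge>N. c \<le> dist ((x \<circ> r) n) ((y \<circ> r) n)" using y(3) by auto
  qed
  ultimately show "l \<in> {w\<in>X. \<exists>w'\<in>X. \<pi> w' = \<pi> w \<and> c \<le> dist w w'}" using lX l'(1) by blast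
qed

lemma back_dense:
  fixes X :: "'a::metric_space set"
  assumes "tdsh X T" and hom: "homeomorphism X X T Tinv"
    and D: "closed D" "D \<subseteq> X" "D \<noteq> {}" "Tinv ` D \<subseteq> D"
  shows "X \<subseteq> D"
proof -
  interpret tdsh X T by fact
  have TTinv: "\<And>y. y \<in> X \<Longrightarrow> T (Tinv y) = y" using hom by (simp add: homeomorphism_def)
  obtain z where z: "z \<in> D" using D by auto
  define s where "s = (\<lambda>n. (Tinv^^n) z)"
  have sD: "s n \<in> D" for n by (induction n) (use z D(4) in \<open>auto simp: s_def\<close>)
  have sX: "s n \<in> X" for n using sD D(2) by auto
  have sT: "T (s (Suc n)) = s n" for n using TTinv sX by (simp add: s_def)
  have cD: "compact D"
  proof -
    have "compact (X \<inter> D)" using compact_Int_closed[OF cpt D(1)] .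
    then show ?thesis using D(2) by (simp add: Int_absorb1)
  qed
  obtain l r where lr: "l \<in> D" "strict_mono r" "(s \<circ> r) \<longlonglongrightarrow> l"
    using seq_compactE[OF compact_imp_seq_compact[OF cD], of s] sD by blast
  define L where "L = {l. \<forall>\<epsilon>>0. \<forall>N. \<exists>n\<ge>N. dist (s n) l < \<epsilon>}"
  have lL: "l \<in> L" unfolding L_def
  proof (intro CollectI allI impI)
    fix \<epsilon> :: real and N assume e: "\<epsilon> > 0"
    obtain M where M: "\<forall>n\<ge>M. dist ((s \<circ> r) n) l < \<epsilon>" using lr(3) e unfolding lim_sequentially by blast
    have "r (max M N) \<ge> N" using seq_suble[OF lr(2), of "max M N"] by simp
    moreover have "dist (s (r (max M N))) l < \<epsilon>" using M by simp
    ultimately show "\<exists>n\<ge>N. dist (s n) l < \<epsilon>" by blast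
  qed
  have LD: "L \<subseteq> D"
  proof
    fix l' assume "l' \<in> L"
    then have "l' \<in> closure D" unfolding L_def closure_approachable using sD by blast
    then show "l' \<in> D" using D(1) by simp
  qed
  have LT: "T l' \<in> L" if l'L: "l' \<in> L" for l'
    unfolding L_def
  proof (intro CollectI allI impI)
    fix \<epsilon> :: real and N assume e: "\<epsilon> > 0"
    have l'X: "l' \<in> X" using l'L LD D(2) by auto
    obtain d where d: "d > 0" "\<forall>w\<in>X. dist w l' < d \<longrightarrow> dist (T w) (T l') < \<epsilon>"
      using continuous_on_iff[THEN iffD1, OF cont, rule_format, OF l'X e] by blast
    obtain n where n: "n \<ge> Suc N" "dist (s n) l' < d" using l'L d(1) unfolding L_def by blast
    then obtain n' where n': "n = Suc n'" by (cases n) auto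
    have "T (s n) = s n'" using sT n' by simp
    moreover have "dist (T (s n)) (T l') < \<epsilon>" using d(2) sX[of n] n(2) by blast
    ultimately have "dist (s n') (T l') < \<epsilon>" by simp
    then show "\<exists>n\<ge>N. dist (s n) (T l') < \<epsilon>" using n n' by (intro exI[of _ n']) auto
  qed
  have orb: "(T^^m) l \<in> L" for m by (induction m) (use lL LT in auto)
  have "X = closure {(T ^^ n) l | n. True}" using mini lr(1) D(2) by auto
  also have "\<dots> \<subseteq> closure D" using orb LD by (intro closure_mono) auto
  also have "\<dots> = D" using D(1) by simp
  finally show ?thesis .
qed

lemma fiber_far:
  fixes X :: "'a::metric_space set" and \<pi> :: "'a \<Rightarrow> 'b::metric_space"
  assumes td: "tdsh X T" and hom: "homeomorphism X X T Tinv"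
    and fac: "factor_map X T Y S \<pi>" and nao: "\<not> almost_one_to_one X \<pi>"
  shows "\<exists>\<eta>>0. \<forall>z\<in>X. \<exists>z'\<in>X. \<pi> z' = \<pi> z \<and> dist z z' \<ge> \<eta>"
proof -
  interpret tdsh X T by fact
  have cpi: "continuous_on X \<pi>" and piT: "\<And>x. x \<in> X \<Longrightarrow> \<pi> (T x) = S (\<pi> x)"
    using fac by (auto simp: factor_map_def)
  have Tinv_in: "\<And>y. y \<in> X \<Longrightarrow> Tinv y \<in> X" and TTinv: "\<And>y. y \<in> X \<Longrightarrow> T (Tinv y) = y"
    and TinvT: "\<And>x. x \<in> X \<Longrightarrow> Tinv (T x) = x" and cTinv: "continuous_on X Tinv"
    using hom by (auto simp: homeomorphism_def)
  have Tinvn_in: "y \<in> X \<Longrightarrow> (Tinv^^m) y \<in> X" for y m by (induction m) (auto simp: Tinv_in)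
  have TTinvn: "y \<in> X \<Longrightarrow> (T^^m) ((Tinv^^m) y) = y" for y m
  proof (induction m)
    case (Suc m)
    have "(T^^Suc m) ((Tinv^^Suc m) y) = (T^^Suc m) (Tinv ((Tinv^^m) y))" by simp
    also have "\<dots> = (T^^m) (T (Tinv ((Tinv^^m) y)))" by (simp add: funpow_swap1)
    also have "\<dots> = y" using Suc TTinv Tinvn_in by simp
    finally show ?case .
  qed simp
  have TinvTn: "x \<in> X \<Longrightarrow> (Tinv^^m) ((T^^m) x) = x" for x m
  proof (induction m)
    case (Suc m)
    have "(Tinv^^Suc m) ((T^^Suc m) x) = (Tinv^^Suc m) (T ((T^^m) x))" by simp
    also have "\<dots> = (Tinv^^m) (Tinv (T ((T^^m) x)))" by (simp add: funpow_swap1)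
    also have "\<dots> = x" using Suc TinvT Tn_in by simp
    finally show ?case .
  qed simp
  have cTinvn: "continuous_on X (Tinv^^m)" for m
  proof (induction m)
    case 0 then show ?case by (simp add: continuous_on_id)
  next
    case (Suc m)
    have "continuous_on X (Tinv \<circ> (Tinv^^m))"
      by (rule continuous_on_compose[OF Suc]) (rule continuous_on_subset[OF cTinv], auto simp: Tinvn_in)
    then show ?case by simp
  qed
  have piTn: "x \<in> X \<Longrightarrow> \<pi> ((T^^m) x) = (S^^m) (\<pi> x)" for x m
    by (induction m) (auto simp: piT Tn_in)
  define X1 where "X1 = {x\<in>X. {x'\<in>X. \<pi> x' = \<pi> x} = {x}}"
  obtain x0 where x0: "x0 \<in> X" "x0 \<notin> closure X1"
    using nao unfolding almost_one_to_one_def X1_def by blast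
  obtain r where r: "r > 0" "\<forall>y\<in>X1. \<not> dist y x0 < r"
    using x0(2) unfolding closure_approachable by blast
  define W where "W = X \<inter> ball x0 r"
  have x0W: "x0 \<in> W" using x0 r by (simp add: W_def)
  have nontriv: "\<exists>w'\<in>X. \<pi> w' = \<pi> w \<and> w' \<noteq> w" if "w \<in> W" for w
  proof -
    have "w \<notin> X1" using r that by (auto simp: W_def dist_commute)
    moreover have "w \<in> X" using that by (simp add: W_def)
    ultimately show ?thesis unfolding X1_def by blast
  qed
  define C where "C = (\<lambda>k::nat. {w\<in>X. \<exists>w'\<in>X. \<pi> w' = \<pi> w \<and> inverse (real (Suc k)) \<le> dist w w'})"
  have closedC: "closed (C k)" for k unfolding C_def by (rule closed_far_fiber[OF cpt cpi])
  have cover: "(\<Union>k. W \<inter> C k) = W"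
  proof
    show "W \<subseteq> (\<Union>k. W \<inter> C k)"
    proof
      fix w assume w: "w \<in> W"
      obtain w' where w': "w' \<in> X" "\<pi> w' = \<pi> w" "w' \<noteq> w" using nontriv[OF w] by blast
      have "dist w w' > 0" using w' by simp
      then obtain n where n: "n > 0" "inverse (real n) < dist w w'" using ex_inverse_of_nat_less by blast
      have "inverse (real (Suc (n - 1))) < dist w w'" using n by simp
      then have "w \<in> C (n - 1)" using w w' by (auto simp: C_def W_def intro!: bexI[of _ w'])
      then show "w \<in> (\<Union>k. W \<inter> C k)" using w by blast
    qed
  qed auto
  have WX: "openin (top_of_set X) W" unfolding W_def by (simp add: openin_open_Int)
  have lc: "locally_compact_space (top_of_set W) \<and> regular_space (top_of_set W)"
  proof
    have "compact_space (top_of_set X)" using cpt by (simp add: compact_space_subtopology)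
    then have lcX: "locally_compact_space (top_of_set X)" by (rule compact_imp_locally_compact_space)
    have "locally_compact_space (subtopology (top_of_set X) W)"
      using locally_compact_space_open_subset[OF _ lcX WX] by (simp add: regular_space_subtopology regular_space_euclidean)
    then show "locally_compact_space (top_of_set W)" by (simp add: subtopology_subtopology W_def Int_absorb1)
    show "regular_space (top_of_set W)" by (simp add: regular_space_subtopology regular_space_euclidean)
  qed
  have "\<exists>k. (top_of_set W) interior_of (W \<inter> C k) \<noteq> {}"
  proof (rule ccontr)
    assume neg: "\<not> ?thesis"
    have hyp: "\<And>Tt. Tt \<in> range (\<lambda>k. W \<inter> C k) \<Longrightarrow> closedin (top_of_set W) Tt \<and> (top_of_set W) interior_of Tt = {}"
      using neg closedC by (auto simp: closedin_closed_Int)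
    have "(top_of_set W) interior_of \<Union>(range (\<lambda>k. W \<inter> C k)) = {}"
      by (rule Baire_category_alt[OF _ _ hyp]) (use lc in auto)
    moreover have "(top_of_set W) interior_of \<Union>(range (\<lambda>k. W \<inter> C k)) = W"
      using cover interior_of_topspace[of "top_of_set W"] by simp
    ultimately show False using x0W by simp
  qed
  then obtain k where k: "(top_of_set W) interior_of (W \<inter> C k) \<noteq> {}" by blast
  define Ob where "Ob = (top_of_set W) interior_of (W \<inter> C k)"
  define c where "c = inverse (real (Suc k))"
  have c: "c > 0" by (simp add: c_def)
  have "openin (top_of_set W) Ob" unfolding Ob_def by (rule openin_interior_of)
  then have openO: "openin (top_of_set X) Ob" using WX by (rule openin_trans)
  have "Ob \<subseteq> W \<inter> C k" unfolding Ob_def by (rule interior_of_subset)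
  then have OC: "Ob \<subseteq> C k" by blast
  have One: "Ob \<noteq> {}" using k Ob_def by simp
  have OX: "Ob \<subseteq> X" using openin_subset[OF openO] by simp
  define V where "V = (\<lambda>m. X \<inter> (Tinv^^m) -` Ob)"
  have openV: "openin (top_of_set X) (V m)" for m
    unfolding V_def by (rule continuous_openin_preimage[OF cTinvn _ openO]) (auto simp: Tinvn_in)
  define D where "D = X - (\<Union>m. V m)"
  have closedD: "closed D"
  proof -
    have oU: "openin (top_of_set X) (\<Union>(range V))" using openV by (intro openin_Union) auto
    have "closedin (top_of_set X) (topspace (top_of_set X) - \<Union>(range V))"
      by (rule closedin_diff[OF closedin_topspace oU])
    then have "closedin (top_of_set X) D" unfolding D_def by simp
    then show ?thesis using closedin_closed_trans cpt compact_imp_closed by blast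
  qed
  have DT: "Tinv ` D \<subseteq> D"
  proof
    fix y assume "y \<in> Tinv ` D"
    then obtain z where z: "z \<in> D" "y = Tinv z" by blast
    have zX: "z \<in> X" using z D_def by auto
    have "y \<notin> V m" for m
    proof
      assume "y \<in> V m"
      then have "(Tinv^^Suc m) z \<in> Ob" using z by (simp add: V_def funpow_Suc_right del: funpow.simps)
      then have "z \<in> V (Suc m)" using zX by (simp add: V_def)
      then show False using z D_def by auto
    qed
    then show "y \<in> D" using z Tinv_in zX by (auto simp: D_def)
  qed
  have "D = {}"
  proof (rule ccontr)
    assume "D \<noteq> {}"
    then have "X \<subseteq> D" using back_dense[OF td hom closedD _ _ DT] D_def by blast
    moreover obtain ob where "ob \<in> Ob" using One by blast
    moreover have "ob \<in> V 0" if "ob \<in> Ob" for ob using that OX by (auto simp: V_def)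
    ultimately show False using OX D_def by blast
  qed
  then have Xcov: "X \<subseteq> (\<Union>m. V m)" by (auto simp: D_def)
  have "\<forall>m. \<exists>G. open G \<and> V m = X \<inter> G" using openV by (simp add: openin_open)
  then obtain G where G: "\<And>m. open (G m)" "\<And>m. V m = X \<inter> G m" by metis
  have cov: "X \<subseteq> (\<Union>m\<in>UNIV. G m)"
  proof
    fix z assume z: "z \<in> X"
    then obtain m where "z \<in> V m" using Xcov by blast
    then have "z \<in> G m" using G(2)[of m] by blast
    then show "z \<in> (\<Union>m\<in>UNIV. G m)" by blast
  qed
  have "\<exists>C'. C' \<subseteq> UNIV \<and> finite C' \<and> X \<subseteq> (\<Union>m\<in>C'. G m)"
    by (rule compactE_image[OF cpt _ cov]) (auto simp: G(1))
  then obtain C' where C': "finite C'" "X \<subseteq> (\<Union>m\<in>C'. G m)" by blast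
  define M where "M = Max (insert 0 C')"
  have bound: "\<exists>m\<le>M. (Tinv^^m) z \<in> Ob" if zX: "z \<in> X" for z
  proof -
    obtain m where m: "m \<in> C'" "z \<in> G m" using C' zX by blast
    have "m \<le> M" using m C' by (simp add: M_def)
    moreover have "z \<in> V m" using m zX G(2) by blast
    ultimately show ?thesis by (auto simp: V_def)
  qed
  have "\<forall>m. \<exists>e>0. \<forall>a\<in>X. \<forall>b\<in>X. dist a b < e \<longrightarrow> dist ((Tinv^^m) a) ((Tinv^^m) b) < c"
  proof
    fix m
    have "uniformly_continuous_on X (Tinv^^m)" by (rule compact_uniformly_continuous[OF cTinvn cpt])
    then obtain e where e: "e > 0" "\<forall>x\<in>X. \<forall>x'\<in>X. dist x' x < e \<longrightarrow> dist ((Tinv^^m) x') ((Tinv^^m) x) < c"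
      using c unfolding uniformly_continuous_on_def by blast
    show "\<exists>e>0. \<forall>a\<in>X. \<forall>b\<in>X. dist a b < e \<longrightarrow> dist ((Tinv^^m) a) ((Tinv^^m) b) < c"
      using e by (metis dist_commute)
  qed
  then obtain e where e: "\<And>m. e m > 0" "\<And>m a b. a \<in> X \<Longrightarrow> b \<in> X \<Longrightarrow> dist a b < e m \<Longrightarrow> dist ((Tinv^^m) a) ((Tinv^^m) b) < c"
    by metis
  define \<eta> where "\<eta> = Min (e ` {..M})"
  have \<eta>: "\<eta> > 0" using e(1) by (simp add: \<eta>_def)
  have \<eta>le: "\<eta> \<le> e m" if "m \<le> M" for m using that by (simp add: \<eta>_def)
  show ?thesis
  proof (intro exI[of _ \<eta>] conjI ballI \<eta>)
    fix z assume z: "z \<in> X"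
    obtain m where m: "m \<le> M" "(Tinv^^m) z \<in> Ob" using bound[OF z] by blast
    define ob where "ob = (Tinv^^m) z"
    have "ob \<in> C k" using m OC ob_def by blast
    then obtain ob' where ob': "ob' \<in> X" "\<pi> ob' = \<pi> ob" "c \<le> dist ob ob'" by (auto simp: C_def c_def)
    have oX: "ob \<in> X" using ob_def Tinvn_in z by simp
    define z' where "z' = (T^^m) ob'"
    have z'X: "z' \<in> X" using ob' Tn_in z'_def by simp
    have "(T^^m) ob = z" using TTinvn z ob_def by simp
    then have "\<pi> z' = \<pi> z" using piTn ob' oX z'_def by metis
    moreover have "dist z z' \<ge> \<eta>"
    proof (rule ccontr)
      assume "\<not> dist z z' \<ge> \<eta>"
      then have "dist z z' < e m" using \<eta>le[OF m(1)] by simp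
      then have "dist ((Tinv^^m) z) ((Tinv^^m) z') < c" using e(2) z z'X by blast
      moreover have "(Tinv^^m) z' = ob'" using TinvTn ob'(1) z'_def by simp
      ultimately show False using ob' ob_def by simp
    qed
    ultimately show "\<exists>z'\<in>X. \<pi> z' = \<pi> z \<and> dist z z' \<ge> \<eta>" using z'X by blast
  qed
qed


theorem proposition4p7:
  fixes X :: "'a::metric_space set" and T :: "'a \<Rightarrow> 'a"
    and Y :: "'b::metric_space set" and S :: "'b \<Rightarrow> 'b" and \<pi> :: "'a \<Rightarrow> 'b"
  assumes "minimal_tds X T" and "minimal_tds Y S"
    and "\<exists>Tinv. homeomorphism X X T Tinv"
    and "factor_map X T Y S \<pi>"
    and "proximal_factor X T \<pi>"
    and "\<not> almost_one_to_one X \<pi>"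
  shows "strongly_Fip_sensitive X T"
proof -
  have td: "tdsh X T" using assms(1) unfolding minimal_tds_def tds_def by unfold_locales auto
  interpret tdsh X T by (rule td)
  obtain Tinv where hom: "homeomorphism X X T Tinv" using assms(3) by blast
  obtain \<eta> where \<eta>: "\<eta> > 0" "\<forall>z\<in>X. \<exists>z'\<in>X. \<pi> z' = \<pi> z \<and> dist z z' \<ge> \<eta>"
    using fiber_far[OF td hom assms(4) assms(6)] by blast
  show ?thesis unfolding strongly_Fip_sensitive_def
  proof (intro exI[of _ "\<eta>/2"] conjI allI impI)
    show "\<eta>/2 > 0" using \<eta> by simp
    fix U assume U: "openin (top_of_set X) U \<and> U \<noteq> {}"
    obtain x where xU: "x \<in> U" using U by blast
    have "U \<subseteq> X" by (rule openin_imp_subset[OF conjunct1[OF U]])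
    then have xX: "x \<in> X" using xU by blast
    obtain r where r: "r > 0" "\<forall>x'\<in>X. dist x' x < r \<longrightarrow> x' \<in> U"
      using U xU unfolding openin_euclidean_subtopology_iff by blast
    define r' where "r' = min r (\<eta>/4)"
    define U' where "U' = X \<inter> ball x r'"
    have U'open: "openin (top_of_set X) U'" by (simp add: U'_def openin_open_Int)
    have "x \<in> U'" using xX r \<eta> by (simp add: U'_def r'_def)
    then have U'ne: "U' \<noteq> {}" by blast
    have U'U: "U' \<subseteq> U" using r by (auto simp: U'_def r'_def dist_commute)
    obtain x' where x': "x' \<in> X" "\<pi> x' = \<pi> x" "dist x x' \<ge> \<eta>" using \<eta> xX by metis
    have prox: "proximal_pair T x x'" using assms(5) xX x' unfolding proximal_factor_def by metis
    have close: "\<forall>\<epsilon>>0. \<exists>n\<ge>1. dist ((T^^n) x) ((T^^n) x') < \<epsilon>"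
    proof (intro allI impI)
      fix \<epsilon> :: real assume e: "\<epsilon> > 0"
      have bdd: "bdd_below (range (\<lambda>n. dist ((T^^n) x) ((T^^n) x')))" by (rule bdd_belowI[of _ 0]) auto
      have "(INF n. dist ((T^^n) x) ((T^^n) x')) < min \<epsilon> \<eta>" using prox e \<eta> unfolding proximal_pair_def by simp
      then have "\<exists>n. dist ((T^^n) x) ((T^^n) x') < min \<epsilon> \<eta>"
        using cINF_less_iff[OF UNIV_not_empty bdd] by blast
      then obtain n where n: "dist ((T^^n) x) ((T^^n) x') < min \<epsilon> \<eta>" by blast
      have "n \<noteq> 0" using n x'(3) by (cases n) auto
      then show "\<exists>n\<ge>1. dist ((T^^n) x) ((T^^n) x') < \<epsilon>" using n by (intro exI[of _ n]) auto
    qed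
    obtain u where u: "u \<in> E" "u \<circ> u = u" "u x = x'" "u x' = x'"
      using fix_idem[OF xX x'(1) collapse[OF xX x'(1) close]] by blast
    obtain y where y: "y \<in> U'" "u y = y" using dense_fix[OF u(1) u(2) U'open U'ne] by blast
    have yX: "y \<in> X" and dxy: "dist x y < \<eta>/4" using y by (auto simp: U'_def r'_def)
    have far: "dist x' y > \<eta>/2"
    proof -
      have "dist x x' \<le> dist x y + dist y x'" by (rule dist_triangle)
      moreover have "dist y x' = dist x' y" by (rule dist_commute)
      ultimately show ?thesis using dxy x'(3) \<eta>(1) by linarith
    qed
    have Q: "\<exists>n\<ge>1. dist ((T^^n) x) x' < \<epsilon> \<and> dist ((T^^n) y) y < \<epsilon>
            \<and> dist ((T^^n) x') x' < \<epsilon> \<and> dist ((T^^n) y) y < \<epsilon>" if e: "\<epsilon> > 0" for \<epsilon>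
    proof -
      have "\<exists>n\<ge>1. \<forall>i\<in>{x, y, x'}. (T^^n) (id i) \<in> ball (u i) \<epsilon>"
        using approx[OF u(1), of "{x, y, x'}" id "\<lambda>i. ball (u i) \<epsilon>"] xX yX x'(1) e by auto
      then show ?thesis using u y by (auto simp: dist_commute)
    qed
    have "{n. dist ((T^^n) x) ((T^^n) y) > \<eta>/2} \<in> F_ip"
      by (rule IP_lemma[OF xX yX x'(1) yX far]) (use Q in blast)
    then show "\<exists>x\<in>U. \<exists>y\<in>U. {n. dist ((T ^^ n) x) ((T ^^ n) y) > \<eta>/2} \<in> F_ip"
      using xU y U'U by blast
  qed
qed

end
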